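(* Let $(X,d,\kappa)$ be a digital metric space with $X$ finite, and let $T:X\to X$. If $T$ is a digital contraction map, then there exists $\phi\in\Phi$ such that $T$ is $\phi$-contractive. Conversely (with $X$ finite), if $T$ is $\phi$-contractive for some $\phi\in\Phi$, then $T$ is a digital contraction map.
   Context: A digital metric space is a triple $(X,d,\kappa)$ where $X\subset\mathbb{Z}^n$ for some positive integer $n$, $\kappa$ is an adjacency relation on $X$, and $d$ is a metric on $X$. $\Phi$ is the set of functions $\phi:[0,\infty)\to[0,\infty)$ that are increasing, satisfy $\phi(t)=0$ iff $t=0$, and $\phi(t)<t$ for $t>0$. $T$ is $\phi$-contractive if $\phi(d(T(x),T(y)))<\phi(d(x,y))$ for all $x,y\in X$ with $x\ne y$. $T$ is a digital contraction map if there is $\alpha\in(0,1)$ with $d(T(x),T(y))\le\alpha\,d(x,y)$ for all $x,y\in X$. *)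

theory Defs
  imports "HOL-Analysis.Analysis"
begin

definition metric_on :: "('a set) \<Rightarrow> ('a \<Rightarrow> 'a \<Rightarrow> real) \<Rightarrow> bool" where
  "metric_on X d \<longleftrightarrow>
     (\<forall>x\<in>X. \<forall>y\<in>X. d x y \<ge> 0 \<and> (d x y = 0 \<longleftrightarrow> x = y) \<and> d x y = d y x) \<and>
     (\<forall>x\<in>X. \<forall>y\<in>X. \<forall>z\<in>X. d x z \<le> d x y + d y z)"

definition adjacency_on :: "('a set) \<Rightarrow> ('a \<Rightarrow> 'a \<Rightarrow> bool) \<Rightarrow> bool" where
  "adjacency_on X \<kappa> \<longleftrightarrow>
     (\<forall>x y. \<kappa> x y \<longrightarrow> x \<in> X \<and> y \<in> X) \<and> (\<forall>x y. \<kappa> x y \<longrightarrow> \<kappa> y x) \<and> (\<forall>x. \<not> \<kappa> x x)"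

definition digital_metric_space ::
  "((int, 'n::finite) vec) set \<Rightarrow> (int ^ 'n \<Rightarrow> int ^ 'n \<Rightarrow> real) \<Rightarrow> (int ^ 'n \<Rightarrow> int ^ 'n \<Rightarrow> bool) \<Rightarrow> bool" where
  "digital_metric_space X d \<kappa> \<longleftrightarrow> metric_on X d \<and> adjacency_on X \<kappa>"

definition Phi :: "(real \<Rightarrow> real) set" where
  "Phi = {\<phi>. (\<forall>t\<ge>0. \<phi> t \<ge> 0) \<and> mono_on {0..} \<phi> \<and>
               (\<forall>t\<ge>0. \<phi> t = 0 \<longleftrightarrow> t = 0) \<and> (\<forall>t>0. \<phi> t < t)}"

definition phi_contractive :: "'a set \<Rightarrow> ('a \<Rightarrow> 'a \<Rightarrow> real) \<Rightarrow> ('a \<Rightarrow> 'a) \<Rightarrow> (real \<Rightarrow> real) \<Rightarrow> bool" where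
  "phi_contractive X d T \<phi> \<longleftrightarrow>
     (\<forall>x\<in>X. \<forall>y\<in>X. x \<noteq> y \<longrightarrow> \<phi> (d (T x) (T y)) < \<phi> (d x y))"

definition digital_contraction :: "'a set \<Rightarrow> ('a \<Rightarrow> 'a \<Rightarrow> real) \<Rightarrow> ('a \<Rightarrow> 'a) \<Rightarrow> bool" where
  "digital_contraction X d T \<longleftrightarrow>
     (\<exists>\<alpha>. 0 < \<alpha> \<and> \<alpha> < 1 \<and> (\<forall>x\<in>X. \<forall>y\<in>X. d (T x) (T y) \<le> \<alpha> * d x y))"

end

theory Submission
  imports Defs
begin

theorem proposition7p5:
  fixes X :: "(int ^ 'n) set" and d :: "int ^ 'n \<Rightarrow> int ^ 'n \<Rightarrow> real"
    and \<kappa> :: "int ^ 'n \<Rightarrow> int ^ 'n \<Rightarrow> bool" and T :: "int ^ 'n \<Rightarrow> int ^ 'n"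
  assumes "digital_metric_space X d \<kappa>" and "finite X" and "T ` X \<subseteq> X"
  shows "(digital_contraction X d T \<longrightarrow> (\<exists>\<phi>\<in>Phi. phi_contractive X d T \<phi>)) \<and>
         ((\<exists>\<phi>\<in>Phi. phi_contractive X d T \<phi>) \<longrightarrow> digital_contraction X d T)"
proof -
  have M: "metric_on X d" using assms(1) by (simp add: digital_metric_space_def)
  have pos: "d x y > 0" if "x \<in> X" "y \<in> X" "x \<noteq> y" for x y
    using M that unfolding metric_on_def by (metis less_eq_real_def)
  have nn: "d x y \<ge> 0" if "x \<in> X" "y \<in> X" for x y
    using M that unfolding metric_on_def by blast
  have TX: "T x \<in> X" if "x \<in> X" for x using assms(3) that by blast
  have A: "\<exists>\<phi>\<in>Phi. phi_contractive X d T \<phi>" if dc: "digital_contraction X d T"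
  proof
    obtain \<alpha> where a: "0 < \<alpha>" "\<alpha> < 1" "\<forall>x\<in>X. \<forall>y\<in>X. d (T x) (T y) \<le> \<alpha> * d x y"
      using dc unfolding digital_contraction_def by blast
    show "(\<lambda>t. t / 2) \<in> Phi" unfolding Phi_def by (auto simp: mono_on_def)
    show "phi_contractive X d T (\<lambda>t. t / 2)"
      unfolding phi_contractive_def
    proof (intro ballI impI)
      fix x y assume xy: "x \<in> X" "y \<in> X" "x \<noteq> y"
      have "d (T x) (T y) \<le> \<alpha> * d x y" using a xy by blast
      also have "\<dots> < d x y" using pos[OF xy] a by simp
      finally show "d (T x) (T y) / 2 < d x y / 2" by simp
    qed
  qed
  have B: "digital_contraction X d T" if ex: "\<exists>\<phi>\<in>Phi. phi_contractive X d T \<phi>"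
  proof -
    obtain \<phi> where p: "\<phi> \<in> Phi" "phi_contractive X d T \<phi>" using ex by blast
    have lt: "d (T x) (T y) < d x y" if xy: "x \<in> X" "y \<in> X" "x \<noteq> y" for x y
    proof (rule ccontr)
      assume "\<not> d (T x) (T y) < d x y"
      hence "d x y \<le> d (T x) (T y)" by simp
      moreover have "mono_on {0..} \<phi>" using p(1) by (simp add: Phi_def)
      ultimately have "\<phi> (d x y) \<le> \<phi> (d (T x) (T y))"
        using nn[OF xy(1,2)] nn[OF TX[OF xy(1)] TX[OF xy(2)]]
        by (simp add: mono_on_def)
      moreover have "\<phi> (d (T x) (T y)) < \<phi> (d x y)"
        using p(2) xy unfolding phi_contractive_def by blast
      ultimately show False by simp
    qed
    define S where "S = (\<lambda>(x, y). d (T x) (T y) / d x y) ` {p \<in> X \<times> X. fst p \<noteq> snd p}"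
    have fS: "finite S" unfolding S_def using assms(2) by simp
    have S1: "s < 1" if "s \<in> S" for s
      using that lt pos unfolding S_def by auto
    define \<alpha> where "\<alpha> = Max (insert (1/2) S)"
    have a1: "\<alpha> < 1" unfolding \<alpha>_def using fS S1 by simp
    have a0: "1/2 \<le> \<alpha>" unfolding \<alpha>_def using fS by (intro Max_ge) auto
    have ge: "s \<le> \<alpha>" if "s \<in> S" for s unfolding \<alpha>_def using fS that by (intro Max_ge) auto
    show ?thesis unfolding digital_contraction_def
    proof (intro exI conjI ballI)
      show "0 < \<alpha>" using a0 by simp
      show "\<alpha> < 1" by (rule a1)
      fix x y assume xy: "x \<in> X" "y \<in> X"
      show "d (T x) (T y) \<le> \<alpha> * d x y"
      proof (cases "x = y")
        case True
        have "d (T y) (T y) = 0" "d y y = 0" using M TX[OF xy(2)] xy(2) unfolding metric_on_def by blast+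
        then show ?thesis using True by simp
      next
        case False
        have "d (T x) (T y) / d x y \<in> S" unfolding S_def using xy False by force
        hence "d (T x) (T y) / d x y \<le> \<alpha>" by (rule ge)
        thus ?thesis using pos[OF xy False] by (simp add: divide_le_eq mult.commute)
      qed
    qed
  qed
  show ?thesis using A B by blast
qed

end
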